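(* Let $k$ be a field, $(X,\leq)$ a locally finite preordered set and $C=IC(X)$. Then every indecomposable injective right $C$-comodule is isomorphic to $E_x$ for some $x\in X$.
   Context: $(X,\leq)$ is a reflexive transitive relation with all intervals $[x,y]$ finite. $IC(X)$ has $k$-basis $\{e_{x,y}\mid x\leq y\}$, $\Delta(e_{x,y})=\sum_{x\leq z\leq y}e_{x,z}\otimes e_{z,y}$, $\varepsilon(e_{x,y})=\delta_{x,y}$. For $x\in X$, $E_x=\operatorname{span}\{e_{x,y}\mid y\in X,\ x\leq y\}$, a right $C$-subcomodule of $C$. *)

theory Defs
  imports Complex_Main "HOL-Library.Function_Algebras"
begin

text \<open>
  Incidence coalgebra C = IC(X) of a preorder X (the type 'x, order from class preorder).
  C has k-basis e_(a,b) for a \<le> b. A right C-comodule M is a k-subspace V of a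
  k-vector space (type 'm with scalar multiplication sc) together with a coaction
  rho : M \<rightarrow> M \<otimes> C. Since C has the basis e_(a,b), an element of M \<otimes> C is uniquely
  a finite sum  sum_(a\<le>b) m_(a,b) \<otimes> e_(a,b); we encode rho by the coefficient map
  rho m (a,b) = m_(a,b). Coassociativity and counitality are written out on this basis.
\<close>

definition is_comodule ::
  "('k::field \<Rightarrow> 'm::ab_group_add \<Rightarrow> 'm) \<Rightarrow> 'm set \<Rightarrow> ('m \<Rightarrow> 'x::preorder \<times> 'x \<Rightarrow> 'm) \<Rightarrow> bool" where
  "is_comodule sc V \<rho> \<longleftrightarrow>
     0 \<in> V \<and> (\<forall>m\<in>V. \<forall>n\<in>V. m + n \<in> V) \<and> (\<forall>c. \<forall>m\<in>V. sc c m \<in> V)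
   \<and> (\<forall>m\<in>V. \<forall>p. \<rho> m p \<in> V)
   \<and> (\<forall>m\<in>V. finite {p. \<rho> m p \<noteq> 0})
   \<and> (\<forall>m\<in>V. \<forall>a b. \<not> a \<le> b \<longrightarrow> \<rho> m (a, b) = 0)
   \<and> (\<forall>m\<in>V. \<forall>n\<in>V. \<forall>p. \<rho> (m + n) p = \<rho> m p + \<rho> n p)
   \<and> (\<forall>c. \<forall>m\<in>V. \<forall>p. \<rho> (sc c m) p = sc c (\<rho> m p))
   \<and> (\<forall>m\<in>V. \<forall>a b c d. a \<le> b \<longrightarrow> c \<le> d \<longrightarrow>
          \<rho> (\<rho> m (c, d)) (a, b) = (if b = c then \<rho> m (a, d) else 0))
   \<and> (\<forall>m\<in>V. m = (\<Sum>x\<in>{x. \<rho> m (x, x) \<noteq> 0}. \<rho> m (x, x)))"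

definition comod_hom ::
  "('k::field \<Rightarrow> 'm::ab_group_add \<Rightarrow> 'm) \<Rightarrow> 'm set \<Rightarrow> ('m \<Rightarrow> 'x::preorder \<times> 'x \<Rightarrow> 'm) \<Rightarrow>
   ('k \<Rightarrow> 'n::ab_group_add \<Rightarrow> 'n) \<Rightarrow> 'n set \<Rightarrow> ('n \<Rightarrow> 'x \<times> 'x \<Rightarrow> 'n) \<Rightarrow> ('m \<Rightarrow> 'n) \<Rightarrow> bool" where
  "comod_hom sc1 V \<rho> sc2 W \<sigma> f \<longleftrightarrow>
     (\<forall>m\<in>V. f m \<in> W)
   \<and> (\<forall>m\<in>V. \<forall>n\<in>V. f (m + n) = f m + f n)
   \<and> (\<forall>c. \<forall>m\<in>V. f (sc1 c m) = sc2 c (f m))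
   \<and> (\<forall>m\<in>V. \<forall>p. \<sigma> (f m) p = f (\<rho> m p))"

definition comod_iso ::
  "('k::field \<Rightarrow> 'm::ab_group_add \<Rightarrow> 'm) \<Rightarrow> 'm set \<Rightarrow> ('m \<Rightarrow> 'x::preorder \<times> 'x \<Rightarrow> 'm) \<Rightarrow>
   ('k \<Rightarrow> 'n::ab_group_add \<Rightarrow> 'n) \<Rightarrow> 'n set \<Rightarrow> ('n \<Rightarrow> 'x \<times> 'x \<Rightarrow> 'n) \<Rightarrow> bool" where
  "comod_iso sc1 V \<rho> sc2 W \<sigma> \<longleftrightarrow>
     (\<exists>f. comod_hom sc1 V \<rho> sc2 W \<sigma> f \<and> bij_betw f V W)"

definition pscale :: "'k::field \<Rightarrow> ('i \<Rightarrow> 'k) \<Rightarrow> ('i \<Rightarrow> 'k)" where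
  "pscale c v = (\<lambda>i. c * v i)"

definition injective_comodule ::
  "('k::field \<Rightarrow> 'm::ab_group_add \<Rightarrow> 'm) \<Rightarrow> 'm set \<Rightarrow> ('m \<Rightarrow> 'x::preorder \<times> 'x \<Rightarrow> 'm) \<Rightarrow> bool" where
  "injective_comodule sc V \<rho> \<longleftrightarrow>
     (\<forall>(N :: (nat \<Rightarrow> 'k) set) \<rho>N (P :: (nat \<Rightarrow> 'k) set) \<rho>P f g.
        is_comodule pscale N \<rho>N \<and> is_comodule pscale P \<rho>P
        \<and> comod_hom pscale N \<rho>N pscale P \<rho>P f \<and> inj_on f N
        \<and> comod_hom pscale N \<rho>N sc V \<rho> g
        \<longrightarrow> (\<exists>h. comod_hom pscale P \<rho>P sc V \<rho> h \<and> (\<forall>n\<in>N. h (f n) = g n)))"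

definition indecomposable_comodule ::
  "('k::field \<Rightarrow> 'm::ab_group_add \<Rightarrow> 'm) \<Rightarrow> 'm set \<Rightarrow> ('m \<Rightarrow> 'x::preorder \<times> 'x \<Rightarrow> 'm) \<Rightarrow> bool" where
  "indecomposable_comodule sc V \<rho> \<longleftrightarrow>
     V \<noteq> {0} \<and>
     (\<forall>A B. A \<subseteq> V \<and> B \<subseteq> V \<and> is_comodule sc A \<rho> \<and> is_comodule sc B \<rho>
        \<and> A \<inter> B = {0} \<and> (\<forall>m\<in>V. \<exists>a\<in>A. \<exists>b\<in>B. m = a + b)
        \<longrightarrow> A = {0} \<or> B = {0})"

text \<open>Elements of C = IC(X) as finitely supported coefficient functions on pairs (a,b), a \<le> b;
  the right C-comodule structure of C (given by the comultiplication) in coefficient form: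
  Delta(v) = sum_(a\<le>b) rho v (a,b) \<otimes> e_(a,b).\<close>
definition inc_coact :: "('x::preorder \<times> 'x \<Rightarrow> 'k::zero) \<Rightarrow> 'x \<times> 'x \<Rightarrow> ('x \<times> 'x \<Rightarrow> 'k)" where
  "inc_coact v = (\<lambda>(a, b). if a \<le> b then (\<lambda>(p, z). if z = a \<and> p \<le> a then v (p, b) else 0)
                           else (\<lambda>_. 0))"

definition Ex :: "'x::preorder \<Rightarrow> ('x \<times> 'x \<Rightarrow> 'k::zero) set" where
  "Ex x = {v. finite {p. v p \<noteq> 0} \<and> (\<forall>p q. v (p, q) \<noteq> 0 \<longrightarrow> p = x \<and> x \<le> q)}"

end

theory Submission
  imports Defs
begin


lemma sum_fun_apply: "(sum f A) z = sum (\<lambda>a. f a z) A"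
  by (induct A rule: infinite_finite_induct) auto

lemma is_comoduleI:
  assumes "0 \<in> V" "\<And>m n. m\<in>V \<Longrightarrow> n\<in>V \<Longrightarrow> m + n \<in> V" "\<And>c m. m\<in>V \<Longrightarrow> sc c m \<in> V"
   "\<And>m p. m\<in>V \<Longrightarrow> \<rho> m p \<in> V"
   "\<And>m. m\<in>V \<Longrightarrow> finite {p. \<rho> m p \<noteq> 0}"
   "\<And>m a b. m\<in>V \<Longrightarrow> \<not> a \<le> b \<Longrightarrow> \<rho> m (a, b) = 0"
   "\<And>m n p. m\<in>V \<Longrightarrow> n\<in>V \<Longrightarrow> \<rho> (m + n) p = \<rho> m p + \<rho> n p"
   "\<And>c m p. m\<in>V \<Longrightarrow> \<rho> (sc c m) p = sc c (\<rho> m p)"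
   "\<And>m a b c d. m\<in>V \<Longrightarrow> a \<le> b \<Longrightarrow> c \<le> d \<Longrightarrow>
          \<rho> (\<rho> m (c, d)) (a, b) = (if b = c then \<rho> m (a, d) else 0)"
   "\<And>m. m\<in>V \<Longrightarrow> m = (\<Sum>x\<in>{x. \<rho> m (x, x) \<noteq> 0}. \<rho> m (x, x))"
  shows "is_comodule sc V \<rho>"
  unfolding is_comodule_def by (intro conjI ballI allI impI; (rule assms; assumption+))

lemmas cmU = is_comodule_def[THEN iffD1]
lemmas cm_zero = cmU[THEN conjunct1, rule_format]
lemmas cm_add = cmU[THEN conjunct2, THEN conjunct1, rule_format]
lemmas cm_sc = cmU[THEN conjunct2, THEN conjunct2, THEN conjunct1, rule_format]
lemmas cm_rho = cmU[THEN conjunct2, THEN conjunct2, THEN conjunct2, THEN conjunct1, rule_format]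
lemmas cm_fin = cmU[THEN conjunct2, THEN conjunct2, THEN conjunct2, THEN conjunct2, THEN conjunct1, rule_format]
lemmas cm_le = cmU[THEN conjunct2, THEN conjunct2, THEN conjunct2, THEN conjunct2, THEN conjunct2, THEN conjunct1, rule_format]
lemmas cm_radd = cmU[THEN conjunct2, THEN conjunct2, THEN conjunct2, THEN conjunct2, THEN conjunct2, THEN conjunct2, THEN conjunct1, rule_format]
lemmas cm_rsc = cmU[THEN conjunct2, THEN conjunct2, THEN conjunct2, THEN conjunct2, THEN conjunct2, THEN conjunct2, THEN conjunct2, THEN conjunct1, rule_format]
lemmas cm_coass = cmU[THEN conjunct2, THEN conjunct2, THEN conjunct2, THEN conjunct2, THEN conjunct2, THEN conjunct2, THEN conjunct2, THEN conjunct2, THEN conjunct1, rule_format]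
lemmas cm_counit = cmU[THEN conjunct2, THEN conjunct2, THEN conjunct2, THEN conjunct2, THEN conjunct2, THEN conjunct2, THEN conjunct2, THEN conjunct2, THEN conjunct2, rule_format]

lemma cm_rho0: assumes "is_comodule sc V \<rho>" shows "\<rho> 0 p = 0"
proof -
  have "\<rho> (0+0) p = \<rho> 0 p + \<rho> 0 p" by (rule cm_radd[OF assms cm_zero[OF assms] cm_zero[OF assms]])
  then show ?thesis by simp
qed

lemmas chU = comod_hom_def[THEN iffD1]
lemmas ch_mem = chU[ THEN conjunct1, rule_format]
lemmas ch_add = chU[THEN conjunct2, THEN conjunct1, rule_format]
lemmas ch_sc = chU[THEN conjunct2, THEN conjunct2, THEN conjunct1, rule_format]
lemmas ch_col = chU[THEN conjunct2, THEN conjunct2, THEN conjunct2, rule_format]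

lemma comod_homI:
  assumes "\<And>m. m\<in>V \<Longrightarrow> f m \<in> W"
   "\<And>m n. m\<in>V \<Longrightarrow> n\<in>V \<Longrightarrow> f (m + n) = f m + f n"
   "\<And>c m. m\<in>V \<Longrightarrow> f (sc1 c m) = sc2 c (f m)"
   "\<And>m p. m\<in>V \<Longrightarrow> \<sigma> (f m) p = f (\<rho> m p)"
  shows "comod_hom sc1 V \<rho> sc2 W \<sigma> f"
  unfolding comod_hom_def by (intro conjI ballI allI impI; (rule assms; assumption+))

lemma ch_zero: assumes "comod_hom sc1 V \<rho> sc2 W \<sigma> f" "0 \<in> V" shows "f 0 = 0"
proof -
  have "f (0+0) = f 0 + f 0" by (rule ch_add[OF assms(1) assms(2) assms(2)])
  then show ?thesis by simp
qed

lemma ch_mono: "comod_hom sc1 V \<rho> sc2 W \<sigma> f \<Longrightarrow> U \<subseteq> V \<Longrightarrow> comod_hom sc1 U \<rho> sc2 W \<sigma> f"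
  by (rule comod_homI) (auto intro: ch_mem ch_add ch_sc ch_col)

lemma ch_comp: "comod_hom sc1 U \<rho> sc2 V \<sigma> f \<Longrightarrow> comod_hom sc2 V \<sigma> sc3 W \<tau> g
   \<Longrightarrow> comod_hom sc1 U \<rho> sc3 W \<tau> (g \<circ> f)"
  by (rule comod_homI) (auto simp: ch_mem ch_add ch_sc ch_col)

definition Pd :: "'x::preorder \<Rightarrow> 'x set \<Rightarrow> ('x \<times> 'x \<Rightarrow> 'k::zero) set" where
 "Pd x D = {v. finite {p. v p \<noteq> 0} \<and> (\<forall>p q. v (p, q) \<noteq> 0 \<longrightarrow> p = x \<and> x \<le> q \<and> q \<in> D)}"

definition dclosed :: "'x::preorder \<Rightarrow> 'x set \<Rightarrow> bool" where
 "dclosed x D \<longleftrightarrow> (\<forall>a b. x \<le> a \<longrightarrow> a \<le> b \<longrightarrow> b \<in> D \<longrightarrow> a \<in> D)"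

lemma Ex_Pd: "Ex x = Pd x UNIV"
  unfolding Ex_def Pd_def by auto

lemma PdD: "v \<in> Pd x D \<Longrightarrow> v (p, q) \<noteq> 0 \<Longrightarrow> p = x \<and> x \<le> q \<and> q \<in> D"
  unfolding Pd_def by blast

lemma inc_coact_app: "inc_coact v (a, b) (p, z) = (if a \<le> b \<and> z = a \<and> p \<le> a then v (p, b) else 0)"
  unfolding inc_coact_def by auto

lemma Pd_comodule:
  fixes x :: "'x::preorder"
  assumes locfin: "\<forall>x y :: 'x. finite {x..y}" and dc: "dclosed x D"
  shows "is_comodule pscale (Pd x D :: ('x \<times> 'x \<Rightarrow> 'k::field) set) inc_coact"
proof (rule is_comoduleI)
  show "0 \<in> Pd x D" unfolding Pd_def by simp
next
  fix m n :: "'x \<times> 'x \<Rightarrow> 'k" assume "m \<in> Pd x D" "n \<in> Pd x D"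
  then show "m + n \<in> Pd x D" unfolding Pd_def
    apply (auto intro: finite_subset[of _ "{p. m p \<noteq> 0} \<union> {p. n p \<noteq> 0}"])
    by (metis add.right_neutral add.left_neutral)+
next
  fix c and m :: "'x \<times> 'x \<Rightarrow> 'k" assume "m \<in> Pd x D"
  then show "pscale c m \<in> Pd x D" unfolding Pd_def pscale_def
    by (auto intro: finite_subset[of _ "{p. m p \<noteq> 0}"])
next
  fix m :: "'x \<times> 'x \<Rightarrow> 'k" and p assume m: "m \<in> Pd x D"
  obtain a b :: 'x where p: "p = (a, b)" by force
  have fin: "finite {p. inc_coact m (a, b) p \<noteq> 0}"
    by (rule finite_subset[of _ "{(x, a)}"]) (auto simp: inc_coact_app split: if_splits dest: PdD[OF m])
  have "\<forall>q r. inc_coact m (a, b) (q, r) \<noteq> 0 \<longrightarrow> q = x \<and> x \<le> r \<and> r \<in> D"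
    using dc unfolding dclosed_def by (auto simp: inc_coact_app dest: PdD[OF m])
  then show "inc_coact m p \<in> Pd x D" using fin p unfolding Pd_def by auto
next
  fix m :: "'x \<times> 'x \<Rightarrow> 'k" assume m: "m \<in> Pd x D"
  define Q where "Q = snd ` {p. m p \<noteq> 0}"
  have "finite Q" using m unfolding Q_def Pd_def by auto
  have "{p. inc_coact m p \<noteq> 0} \<subseteq> (\<Union>b\<in>Q. {x..b} \<times> {b})"
  proof
    fix p assume "p \<in> {p. inc_coact m p \<noteq> 0}"
    then obtain a b where p: "p = (a,b)" and ne: "inc_coact m (a,b) \<noteq> 0" by (cases p) auto
    then obtain qr where "inc_coact m (a,b) qr \<noteq> 0" by (auto simp: fun_eq_iff)
    then obtain q r where "inc_coact m (a,b) (q,r) \<noteq> 0" by (cases qr) auto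
    then have "a \<le> b" "q \<le> a" "m (q, b) \<noteq> 0" by (auto simp: inc_coact_app split: if_splits)
    then show "p \<in> (\<Union>b\<in>Q. {x..b} \<times> {b})" using PdD[OF m] p unfolding Q_def
      by (auto intro!: bexI[of _ b] image_eqI[of _ _ "(q,b)"])
  qed
  moreover have "finite (\<Union>b\<in>Q. {x..b} \<times> {b})" using \<open>finite Q\<close> locfin
    by (intro finite_UN_I) auto
  ultimately show "finite {p. inc_coact m p \<noteq> 0}" by (rule finite_subset)
next
  fix m :: "'x \<times> 'x \<Rightarrow> 'k" and a b :: 'x assume "\<not> a \<le> b"
  then show "inc_coact m (a, b) = 0" by (auto simp: inc_coact_def)
next
  fix m n :: "'x \<times> 'x \<Rightarrow> 'k" and p
  show "inc_coact (m + n) p = inc_coact m p + inc_coact n p"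
    by (cases p) (auto simp: inc_coact_def)
next
  fix c and m :: "'x \<times> 'x \<Rightarrow> 'k" and p
  show "inc_coact (pscale c m) p = pscale c (inc_coact m p)"
    by (cases p) (auto simp: inc_coact_def pscale_def)
next
  fix m :: "'x \<times> 'x \<Rightarrow> 'k" and a b c d :: 'x assume "a \<le> b" "c \<le> d"
  then show "inc_coact (inc_coact m (c, d)) (a, b) = (if b = c then inc_coact m (a, d) else 0)"
    apply (intro ext) subgoal for pz by (cases pz) (auto simp: inc_coact_app intro: order_trans) done
next
  fix m :: "'x \<times> 'x \<Rightarrow> 'k" assume m: "m \<in> Pd x D"
  define Z where "Z = {z. inc_coact m (z, z) \<noteq> 0}"
  have "finite Z"
  proof (rule finite_subset)
    show "Z \<subseteq> snd ` {p. m p \<noteq> 0}"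
    proof
      fix z assume "z \<in> Z"
      then obtain qr where "inc_coact m (z,z) qr \<noteq> 0" unfolding Z_def by (auto simp: fun_eq_iff)
      then obtain q r where "inc_coact m (z,z) (q,r) \<noteq> 0" by (cases qr) auto
      then have "m (q, z) \<noteq> 0" by (auto simp: inc_coact_app split: if_splits)
      then show "z \<in> snd ` {p. m p \<noteq> 0}" by force
    qed
    show "finite (snd ` {p. m p \<noteq> 0})" using m unfolding Pd_def by auto
  qed
  have "m = (\<Sum>z\<in>Z. inc_coact m (z, z))"
  proof
    fix pq :: "'x \<times> 'x"
    obtain p q where pq: "pq = (p, q)" by force
    have "(\<Sum>z\<in>Z. inc_coact m (z, z)) (p, q) = (\<Sum>z\<in>Z. inc_coact m (z, z) (p, q))"
      by (rule sum_fun_apply)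
    also have "\<dots> = (\<Sum>z\<in>Z. if z = q then (if p \<le> q then m (p, q) else 0) else 0)"
      by (rule sum.cong) (auto simp: inc_coact_app)
    also have "\<dots> = (if q \<in> Z then (if p \<le> q then m (p, q) else 0) else 0)"
      using \<open>finite Z\<close> by (simp add: sum.delta')
    also have "\<dots> = m (p, q)"
    proof (cases "m (p,q) = 0")
      case False
      then have "p = x" "x \<le> q" using PdD[OF m] by auto
      then have "inc_coact m (q,q) (p,q) \<noteq> 0" using False by (auto simp: inc_coact_app)
      then have "q \<in> Z" unfolding Z_def by auto
      then show ?thesis using \<open>p = x\<close> \<open>x \<le> q\<close> by auto
    qed auto
    finally show "m pq = (\<Sum>z\<in>Z. inc_coact m (z, z)) pq" using pq by simp
  qed
  then show "m = (\<Sum>z\<in>{z. inc_coact m (z, z) \<noteq> 0}. inc_coact m (z, z))" unfolding Z_def .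
qed



lemma transport_T0:
  fixes A :: "'a::ab_group_add set"
  assumes "0 \<in> A" "\<And>a b. a\<in>A \<Longrightarrow> b\<in>A \<Longrightarrow> T (a+b) = T a + T b"
  shows "T 0 = (0::'b::ab_group_add)"
proof -
  have "T (0 + 0) = T 0 + T 0" using assms by blast
  then show ?thesis by simp
qed

lemma transport_sum:
  fixes A :: "'a::ab_group_add set" and T :: "'a \<Rightarrow> 'b::ab_group_add"
  assumes cm: "is_comodule sc1 A \<rho>"
   and Tadd: "\<And>a b. a\<in>A \<Longrightarrow> b\<in>A \<Longrightarrow> T (a+b) = T a + T b"
   and fin: "finite Z" and mem: "\<And>z. z \<in> Z \<Longrightarrow> f z \<in> A"
  shows "T (sum f Z) = (\<Sum>z\<in>Z. T (f z)) \<and> sum f Z \<in> A"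
  using fin mem
proof (induct Z rule: finite_induct)
  case empty
  then show ?case using transport_T0[OF cm_zero[OF cm] Tadd] cm_zero[OF cm] by simp
next
  case (insert z Z)
  then have "T (sum f Z) = (\<Sum>z\<in>Z. T (f z))" "sum f Z \<in> A" "f z \<in> A" by auto
  then show ?case using insert Tadd cm_add[OF cm] by simp
qed

lemma transport_comodule:
  fixes sc1 :: "'k::field \<Rightarrow> 'a::ab_group_add \<Rightarrow> 'a" and sc2 :: "'k \<Rightarrow> 'b::ab_group_add \<Rightarrow> 'b"
    and \<rho> :: "'a \<Rightarrow> 'x::preorder \<times> 'x \<Rightarrow> 'a"
  assumes cm: "is_comodule sc1 A \<rho>"
   and ST: "\<And>a. a\<in>A \<Longrightarrow> S (T a) = a"
   and Tadd: "\<And>a b. a\<in>A \<Longrightarrow> b\<in>A \<Longrightarrow> T (a+b) = T a + T b"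
   and Tsc: "\<And>c a. a\<in>A \<Longrightarrow> T (sc1 c a) = sc2 c (T a)"
  shows "is_comodule sc2 (T`A) (\<lambda>w p. T (\<rho> (S w) p))"
proof -
  have T0: "T 0 = 0" by (rule transport_T0[OF cm_zero[OF cm] Tadd])
  have Tz: "T u = 0 \<longleftrightarrow> u = 0" if "u \<in> A" for u
  proof
    assume "T u = 0"
    then have "S (T u) = S (T 0)" using T0 by simp
    then show "u = 0" using ST[OF that] ST[OF cm_zero[OF cm]] by simp
  qed (simp add: T0)
  show ?thesis
  proof (rule is_comoduleI)
    show "0 \<in> T ` A" using T0 cm_zero[OF cm] by (metis image_eqI)
  next
    fix m n assume "m \<in> T ` A" "n \<in> T ` A"
    then obtain a b where "a \<in> A" "b \<in> A" "m = T a" "n = T b" by auto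
    then have "m + n = T (a + b)" using Tadd by simp
    then show "m + n \<in> T ` A" using cm_add[OF cm \<open>a\<in>A\<close> \<open>b\<in>A\<close>] by blast
  next
    fix c m assume "m \<in> T ` A"
    then obtain a where "a \<in> A" "m = T a" by auto
    then have "sc2 c m = T (sc1 c a)" using Tsc by simp
    then show "sc2 c m \<in> T ` A" using cm_sc[OF cm \<open>a\<in>A\<close>] by blast
  next
    fix m p assume "m \<in> T ` A"
    then obtain a where "a \<in> A" "m = T a" by auto
    then show "T (\<rho> (S m) p) \<in> T ` A" using ST cm_rho[OF cm] by simp
  next
    fix m assume "m \<in> T ` A"
    then obtain a where a: "a \<in> A" "m = T a" by auto
    have "{p. T (\<rho> (S m) p) \<noteq> 0} = {p. \<rho> a p \<noteq> 0}" using a ST Tz cm_rho[OF cm] by auto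
    then show "finite {p. T (\<rho> (S m) p) \<noteq> 0}" using cm_fin[OF cm a(1)] by simp
  next
    fix m and a b :: 'x assume "m \<in> T ` A" "\<not> a \<le> b"
    then show "T (\<rho> (S m) (a, b)) = 0" using ST cm_le[OF cm] T0 by auto
  next
    fix m n p assume "m \<in> T ` A" "n \<in> T ` A"
    then obtain a b where ab: "a \<in> A" "b \<in> A" "m = T a" "n = T b" by auto
    then have "S (m + n) = a + b" using Tadd ST cm_add[OF cm] by metis
    then show "T (\<rho> (S (m + n)) p) = T (\<rho> (S m) p) + T (\<rho> (S n) p)"
      using ab ST Tadd cm_radd[OF cm] cm_rho[OF cm] by simp
  next
    fix c m p assume "m \<in> T ` A"
    then obtain a where a: "a \<in> A" "m = T a" by auto
    then have "S (sc2 c m) = sc1 c a" using Tsc ST cm_sc[OF cm] by metis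
    then show "T (\<rho> (S (sc2 c m)) p) = sc2 c (T (\<rho> (S m) p))"
      using a ST Tsc cm_rsc[OF cm] cm_rho[OF cm] by simp
  next
    fix m and a b c d :: 'x assume "m \<in> T ` A" "a \<le> b" "c \<le> d"
    then obtain u where u: "u \<in> A" "m = T u" by auto
    then show "T (\<rho> (S (T (\<rho> (S m) (c, d)))) (a, b)) = (if b = c then T (\<rho> (S m) (a, d)) else 0)"
      using ST cm_rho[OF cm] cm_coass[OF cm u(1) \<open>a \<le> b\<close> \<open>c \<le> d\<close>] T0 by simp
  next
    fix m assume "m \<in> T ` A"
    then obtain a where a: "a \<in> A" "m = T a" by auto
    define Z where "Z = {z. \<rho> a (z, z) \<noteq> 0}"
    have finZ: "finite Z"
    proof -
      have "Z \<subseteq> fst ` {p. \<rho> a p \<noteq> 0}" unfolding Z_def by force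
      then show ?thesis using cm_fin[OF cm a(1)] finite_subset by blast
    qed
    have Sm: "S m = a" using a ST by simp
    have eqZ: "{z. T (\<rho> a (z, z)) \<noteq> 0} = Z" using a ST Tz cm_rho[OF cm] unfolding Z_def by auto
    have "T a = T (\<Sum>z\<in>Z. \<rho> a (z, z))" using cm_counit[OF cm a(1)] unfolding Z_def by simp
    also have "\<dots> = (\<Sum>z\<in>Z. T (\<rho> a (z, z)))"
      using transport_sum[OF cm Tadd finZ, of "\<lambda>z. \<rho> a (z,z)"] cm_rho[OF cm a(1)] by blast
    finally have "m = (\<Sum>z\<in>Z. T (\<rho> a (z, z)))" using a(2) by simp
    then show "m = (\<Sum>z\<in>{z. T (\<rho> (S m) (z, z)) \<noteq> 0}. T (\<rho> (S m) (z, z)))"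
      unfolding Sm eqZ .
  qed
qed

lemma transport_hom1:
  assumes cm: "is_comodule sc1 A \<rho>"
   and ST: "\<And>a. a\<in>A \<Longrightarrow> S (T a) = a"
   and Tadd: "\<And>a b. a\<in>A \<Longrightarrow> b\<in>A \<Longrightarrow> T (a+b) = T a + T b"
   and Tsc: "\<And>c a. a\<in>A \<Longrightarrow> T (sc1 c a) = sc2 c (T a)"
   and h: "comod_hom sc1 A \<rho> sc V \<sigma> \<psi>"
  shows "comod_hom sc2 (T`A) (\<lambda>w p. T (\<rho> (S w) p)) sc V \<sigma> (\<psi> \<circ> S)"
proof (rule comod_homI)
  fix m assume "m \<in> T ` A"
  then show "(\<psi> \<circ> S) m \<in> V" using ST ch_mem[OF h] by auto
next
  fix m n assume "m \<in> T ` A" "n \<in> T ` A"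
  then obtain a b where ab: "a \<in> A" "b \<in> A" "m = T a" "n = T b" by auto
  then have "S (m + n) = a + b" using Tadd ST cm_add[OF cm] by metis
  then show "(\<psi> \<circ> S) (m + n) = (\<psi> \<circ> S) m + (\<psi> \<circ> S) n" using ab ST ch_add[OF h] by simp
next
  fix c m assume "m \<in> T ` A"
  then obtain a where a: "a \<in> A" "m = T a" by auto
  then have "S (sc2 c m) = sc1 c a" using Tsc ST cm_sc[OF cm] by metis
  then show "(\<psi> \<circ> S) (sc2 c m) = sc c ((\<psi> \<circ> S) m)" using a ST ch_sc[OF h] by simp
next
  fix m p assume "m \<in> T ` A"
  then obtain a where a: "a \<in> A" "m = T a" by auto
  then show "\<sigma> ((\<psi> \<circ> S) m) p = (\<psi> \<circ> S) (T (\<rho> (S m) p))" using ST ch_col[OF h] cm_rho[OF cm] by simp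
qed

lemma transport_hom2:
  assumes cm: "is_comodule sc1 A \<rho>"
   and ST: "\<And>a. a\<in>A \<Longrightarrow> S (T a) = a"
   and Tadd: "\<And>a b. a\<in>A \<Longrightarrow> b\<in>A \<Longrightarrow> T (a+b) = T a + T b"
   and Tsc: "\<And>c a. a\<in>A \<Longrightarrow> T (sc1 c a) = sc2 c (T a)"
   and h: "comod_hom sc2 (T`A) (\<lambda>w p. T (\<rho> (S w) p)) sc V \<sigma> h"
  shows "comod_hom sc1 A \<rho> sc V \<sigma> (h \<circ> T)"
proof (rule comod_homI)
  fix m assume "m \<in> A"
  then show "(h \<circ> T) m \<in> V" using ch_mem[OF h] by auto
next
  fix m n assume "m \<in> A" "n \<in> A"
  then show "(h \<circ> T) (m + n) = (h \<circ> T) m + (h \<circ> T) n" using Tadd ch_add[OF h] by simp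
next
  fix c m assume "m \<in> A"
  then show "(h \<circ> T) (sc1 c m) = sc c ((h \<circ> T) m)" using Tsc ch_sc[OF h] by simp
next
  fix m p assume m: "m \<in> A"
  have "\<sigma> (h (T m)) p = h (T (\<rho> (S (T m)) p))" using ch_col[OF h] m by simp
  then show "\<sigma> ((h \<circ> T) m) p = (h \<circ> T) (\<rho> m p)" using ST m by simp
qed




lemma Pd_mono: "G \<subseteq> F \<Longrightarrow> Pd x G \<subseteq> Pd x F" unfolding Pd_def by blast

lemma fin_ext:
  fixes x :: "'x::preorder" and sc :: "'k::field \<Rightarrow> 'm::ab_group_add \<Rightarrow> 'm"
  assumes locfin: "\<forall>x y :: 'x. finite {x..y}"
    and inj: "injective_comodule sc V \<rho>"
    and finF: "finite F" and dG: "dclosed x G" and dF: "dclosed x F" and GF: "G \<subseteq> F"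
    and psi: "comod_hom pscale (Pd x G) inc_coact sc V \<rho> \<psi>"
  shows "\<exists>h. comod_hom pscale (Pd x F) inc_coact sc V \<rho> h \<and> (\<forall>v\<in>Pd x G. h v = \<psi> v)"
proof -
  obtain enc :: "'x \<Rightarrow> nat" and n where "enc ` F = {i. i<n}" and encinj: "inj_on enc F"
    using finite_imp_inj_to_nat_seg[OF finF] by blast
  define T :: "('x\<times>'x\<Rightarrow>'k) \<Rightarrow> (nat \<Rightarrow> 'k)"
    where "T v = (\<lambda>i. if i \<in> enc ` F then v (x, inv_into F enc i) else 0)" for v
  define S :: "(nat \<Rightarrow> 'k) \<Rightarrow> ('x\<times>'x\<Rightarrow>'k)"
    where "S w = (\<lambda>(p,q). if p = x \<and> q \<in> F then w (enc q) else 0)" for w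
  have ST: "S (T v) = v" if "v \<in> Pd x F" for v
  proof
    fix pq :: "'x\<times>'x" obtain p q where pq: "pq = (p,q)" by force
    show "S (T v) pq = v pq"
    proof (cases "p = x \<and> q \<in> F")
      case True then show ?thesis using pq encinj by (simp add: S_def T_def)
    next
      case False then show ?thesis using pq PdD[OF that, of p q] by (auto simp: S_def)
    qed
  qed
  have Tadd: "T (a+b) = T a + T b" for a b by (auto simp: T_def)
  have Tsc: "T (pscale c a) = pscale c (T a)" for c a by (auto simp: T_def pscale_def)
  define rr where "rr = (\<lambda>w p. T (inc_coact (S w) p))"
  have cmF: "is_comodule pscale (Pd x F) inc_coact" by (rule Pd_comodule[OF locfin dF])
  have cmG: "is_comodule pscale (Pd x G) inc_coact" by (rule Pd_comodule[OF locfin dG])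
  have STG: "S (T v) = v" if "v \<in> Pd x G" for v using ST Pd_mono[OF GF] that by blast
  have cN: "is_comodule pscale (T ` Pd x G) rr" unfolding rr_def by (rule transport_comodule[where S=S and T=T, OF cmG STG]) (simp_all add: Tadd Tsc)
  have cP: "is_comodule pscale (T ` Pd x F) rr" unfolding rr_def by (rule transport_comodule[where S=S and T=T, OF cmF ST]) (simp_all add: Tadd Tsc)
  have fh: "comod_hom pscale (T ` Pd x G) rr pscale (T ` Pd x F) rr id"
    by (rule comod_homI) (use Pd_mono[OF GF] in \<open>auto simp: rr_def\<close>)
  have gh: "comod_hom pscale (T ` Pd x G) rr sc V \<rho> (\<psi> \<circ> S)" unfolding rr_def
    by (rule transport_hom1[where S=S and T=T, OF cmG STG _ _ psi]) (simp_all add: Tadd Tsc)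
  have "\<exists>h. comod_hom pscale (T ` Pd x F) rr sc V \<rho> h \<and> (\<forall>n\<in>T ` Pd x G. h (id n) = (\<psi> \<circ> S) n)"
    using inj[unfolded injective_comodule_def, rule_format, of "T ` Pd x G" rr "T ` Pd x F" rr id "\<psi> \<circ> S"]
      cN cP fh gh by simp
  then obtain h' where h': "comod_hom pscale (T ` Pd x F) rr sc V \<rho> h'" "\<forall>n\<in>T ` Pd x G. h' (id n) = (\<psi> \<circ> S) n"
    by blast
  have "comod_hom pscale (Pd x F) inc_coact sc V \<rho> (h' \<circ> T)"
    by (rule transport_hom2[where S=S and T=T, OF cmF ST]) (use h'(1) in \<open>simp_all add: rr_def Tadd Tsc\<close>)
  moreover have "\<forall>v\<in>Pd x G. (h' \<circ> T) v = \<psi> v" using h'(2) STG by auto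
  ultimately show ?thesis by blast
qed




definition exx :: "'x \<Rightarrow> 'x \<Rightarrow> ('x \<times> 'x \<Rightarrow> 'k::{zero,one})" where
  "exx x y = (\<lambda>p. if p = (x, y) then 1 else 0)"

lemma exx_Pd: "x \<le> y \<Longrightarrow> y \<in> D \<Longrightarrow> (exx x y :: 'x::preorder \<times> 'x \<Rightarrow> 'k::{zero,one}) \<in> Pd x D"
proof -
  have "{p. (exx x y :: 'x \<times> 'x \<Rightarrow> 'k) p \<noteq> 0} \<subseteq> {(x,y)}" by (auto simp: exx_def)
  then have "finite {p. (exx x y :: 'x \<times> 'x \<Rightarrow> 'k) p \<noteq> 0}" by (rule finite_subset) simp
  moreover assume "x \<le> y" "y \<in> D"
  ultimately show ?thesis unfolding Pd_def by (auto simp: exx_def split: if_splits)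
qed

lemma exx_app [simp]: "exx x y (x, y) = 1" by (simp add: exx_def)

lemma cm_sum:
  assumes cm: "is_comodule sc V \<rho>" and mem: "\<And>z. z \<in> Z \<Longrightarrow> f z \<in> V"
  shows "sum f Z \<in> V \<and> (\<forall>p. \<rho> (sum f Z) p = (\<Sum>z\<in>Z. \<rho> (f z) p))"
proof (cases "finite Z")
  case True
  then show ?thesis using mem
  proof (induct Z rule: finite_induct)
    case empty
    then show ?case using cm_zero[OF cm] cm_rho0[OF cm] by simp
  next
    case (insert z Z)
    then have "sum f Z \<in> V" "\<forall>p. \<rho> (sum f Z) p = (\<Sum>z\<in>Z. \<rho> (f z) p)" "f z \<in> V" by auto
    then show ?case using insert cm_add[OF cm] cm_radd[OF cm] by simp
  qed
next
  case False
  then show ?thesis using cm_zero[OF cm] cm_rho0[OF cm] by simp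
qed

lemma idU:
  fixes x :: "'x::preorder"
  assumes f: "comod_hom pscale (Pd x D) inc_coact pscale (Ex x) inc_coact f"
    and xD: "x \<in> D" and one: "f (exx x x) (x, x) = (1::'k::field)"
  shows "\<forall>v\<in>Pd x D. f v = v"
proof
  fix v :: "'x \<times> 'x \<Rightarrow> 'k" assume v: "v \<in> Pd x D"
  have fv: "f v \<in> Pd x UNIV" using ch_mem[OF f v] unfolding Ex_Pd .
  show "f v = v"
  proof
    fix pq :: "'x \<times> 'x"
    obtain p q where pq: "pq = (p, q)" by force
    show "f v pq = v pq"
    proof (cases "p = x \<and> x \<le> q")
      case False
      have "f v (p,q) = 0" using PdD[OF fv, of p q] False by blast
      moreover have "v (p,q) = 0" using PdD[OF v, of p q] False by blast
      ultimately show ?thesis using pq by simp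
    next
      case True
      have e: "inc_coact v (x, q) = pscale (v (x, q)) (exx x x)"
      proof
        fix rz :: "'x \<times> 'x"
        obtain r z where rz: "rz = (r, z)" by force
        show "inc_coact v (x, q) rz = pscale (v (x, q)) (exx x x) rz"
          using True PdD[OF v, of r q] rz by (auto simp: inc_coact_app pscale_def exx_def)
      qed
      have exxP: "exx x x \<in> Pd x D" by (rule exx_Pd[OF order_refl xD])
      have "f v (x, q) = inc_coact (f v) (x, q) (x, x)" using True by (simp add: inc_coact_app)
      also have "\<dots> = f (inc_coact v (x, q)) (x, x)" using ch_col[OF f v] by simp
      also have "\<dots> = v (x, q)" unfolding e using ch_sc[OF f exxP] one by (simp add: pscale_def)
      finally show ?thesis using pq True by simp
    qed
  qed
qed

locale mt =
  fixes sc :: "'k::field \<Rightarrow> 'm::ab_group_add \<Rightarrow> 'm" and V :: "'m set"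
    and \<rho> :: "'m \<Rightarrow> 'x::preorder \<times> 'x \<Rightarrow> 'm" and x :: 'x and \<mu> :: "'m \<Rightarrow> 'k" and s :: 'm
  assumes locfin: "\<forall>x y :: 'x. finite {x..y}"
    and vs: "vector_space sc"
    and com: "is_comodule sc V \<rho>"
    and inj: "injective_comodule sc V \<rho>"
    and sV: "s \<in> V" and sx: "\<And>a. \<rho> s (a, x) \<noteq> 0 \<Longrightarrow> x \<le> a" and rss: "\<rho> s (x, x) = s"
    and muadd: "\<And>a b. \<mu> (a + b) = \<mu> a + \<mu> b" and musc: "\<And>c a. \<mu> (sc c a) = c * \<mu> a"
    and mus: "\<mu> s = 1"
begin

interpretation vs: vector_space sc by (rule vs)

lemma mu0: "\<mu> 0 = 0"
  using muadd[of 0 0] by (metis add.right_neutral add_left_cancel)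

definition phi :: "'m \<Rightarrow> ('x \<times> 'x \<Rightarrow> 'k)" where
  "phi m = (\<lambda>(p, q). if p = x then \<mu> (\<rho> m (x, q)) else 0)"

lemma phi_app: "phi m (p, q) = (if p = x then \<mu> (\<rho> m (x, q)) else 0)"
  by (simp add: phi_def)

lemma phi_hom: "comod_hom sc V \<rho> pscale (Ex x) inc_coact phi"
proof (rule comod_homI)
  fix m assume m: "m \<in> V"
  have fin: "finite {p. phi m p \<noteq> 0}"
  proof (rule finite_subset)
    show "{p. phi m p \<noteq> 0} \<subseteq> {p. \<rho> m p \<noteq> 0}"
      by (force simp: phi_def mu0 split: prod.splits if_splits)
  qed (rule cm_fin[OF com m])
  have "\<forall>p q. phi m (p, q) \<noteq> 0 \<longrightarrow> p = x \<and> x \<le> q"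
    using cm_le[OF com m] by (auto simp: phi_app) (metis mu0)
  then show "phi m \<in> Ex x" using fin unfolding Ex_def by blast
next
  fix m n assume "m \<in> V" "n \<in> V"
  then show "phi (m + n) = phi m + phi n"
    by (auto simp: fun_eq_iff phi_app cm_radd[OF com] muadd)
next
  fix c m assume "m \<in> V"
  then show "phi (sc c m) = pscale c (phi m)"
    by (auto simp: fun_eq_iff phi_app cm_rsc[OF com] musc pscale_def)
next
  fix m p assume m: "m \<in> V"
  obtain a b :: 'x where p: "p = (a, b)" by force
  show "inc_coact (phi m) p = phi (\<rho> m p)"
  proof (cases "a \<le> b")
    case False
    then show ?thesis using p cm_le[OF com m False] cm_rho0[OF com]
      by (auto simp: fun_eq_iff inc_coact_def phi_app mu0)
  next
    case True
    show ?thesis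
    proof
      fix rz :: "'x \<times> 'x"
      obtain r z where rz: "rz = (r, z)" by force
      have rm: "\<rho> m (a, b) \<in> V" by (rule cm_rho[OF com m])
      show "inc_coact (phi m) p rz = phi (\<rho> m p) rz"
      proof (cases "x \<le> z")
        case True
        then show ?thesis using p rz \<open>a \<le> b\<close> cm_coass[OF com m True \<open>a \<le> b\<close>]
          by (auto simp: inc_coact_app phi_app mu0)
      next
        case False
        then show ?thesis using p rz cm_le[OF com rm False]
          by (auto simp: inc_coact_app phi_app mu0)
      qed
    qed
  qed
qed

definition D0 :: "'x set" where "D0 = {x..x}"

lemma finD0: "finite D0" unfolding D0_def using locfin by blast

definition g0 :: "('x \<times> 'x \<Rightarrow> 'k) \<Rightarrow> 'm" where
  "g0 v = (\<Sum>z\<in>D0. sc (v (x, z)) (\<rho> s (z, x)))"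

lemma dclosed_D0: "dclosed x D0"
  unfolding dclosed_def D0_def by (metis atLeastAtMost_iff order_trans)

lemma g0_mem: "\<And>z. sc c (\<rho> s (z, x)) \<in> V" using cm_sc[OF com cm_rho[OF com sV]] by blast

lemma g0_hom: "comod_hom pscale (Pd x D0) inc_coact sc V \<rho> g0"
proof (rule comod_homI)
  fix v :: "'x \<times> 'x \<Rightarrow> 'k"
  show "g0 v \<in> V" unfolding g0_def by (rule conjunct1[OF cm_sum[OF com g0_mem]])
next
  fix v w :: "'x \<times> 'x \<Rightarrow> 'k"
  show "g0 (v + w) = g0 v + g0 w"
    by (simp add: g0_def vs.scale_left_distrib sum.distrib)
next
  fix c and v :: "'x \<times> 'x \<Rightarrow> 'k"
  show "g0 (pscale c v) = sc c (g0 v)"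
    by (simp add: g0_def pscale_def vs.scale_sum_right)
next
  fix v :: "'x \<times> 'x \<Rightarrow> 'k" and p assume v: "v \<in> Pd x D0"
  obtain a b :: 'x where p: "p = (a, b)" by force
  have "\<rho> (g0 v) p = (\<Sum>z\<in>D0. \<rho> (sc (v (x, z)) (\<rho> s (z, x))) p)"
    unfolding g0_def by (rule conjunct2[OF cm_sum[OF com g0_mem], rule_format])
  also have "\<dots> = (\<Sum>z\<in>D0. sc (v (x, z)) (\<rho> (\<rho> s (z, x)) p))"
    using cm_rsc[OF com cm_rho[OF com sV]] by simp
  finally have L: "\<rho> (g0 v) p = (\<Sum>z\<in>D0. sc (v (x, z)) (\<rho> (\<rho> s (z, x)) p))" .
  show "\<rho> (g0 v) p = g0 (inc_coact v p)"
  proof (cases "a \<le> b")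
    case False
    then show ?thesis unfolding L using p cm_le[OF com cm_rho[OF com sV] False]
      by (simp add: g0_def inc_coact_def)
  next
    case True
    have "(\<Sum>z\<in>D0. sc (v (x, z)) (\<rho> (\<rho> s (z, x)) p)) = (\<Sum>z\<in>D0. if b = z then sc (v (x, b)) (\<rho> s (a, x)) else 0)"
    proof (rule sum.cong)
      fix z assume "z \<in> D0"
      then have "z \<le> x" unfolding D0_def by simp
      then show "sc (v (x, z)) (\<rho> (\<rho> s (z, x)) p) = (if b = z then sc (v (x, b)) (\<rho> s (a, x)) else 0)"
        using p cm_coass[OF com sV True \<open>z \<le> x\<close>] by auto
    qed simp
    also have "\<dots> = (if b \<in> D0 then sc (v (x, b)) (\<rho> s (a, x)) else 0)"
      using finD0 by (simp add: sum.delta)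
    finally have L2: "\<rho> (g0 v) p = (if b \<in> D0 then sc (v (x, b)) (\<rho> s (a, x)) else 0)" using L by simp
    have "g0 (inc_coact v p) = (\<Sum>z\<in>D0. if a = z then sc (v (x, b)) (\<rho> s (a, x)) else 0)"
      unfolding g0_def
    proof (rule sum.cong)
      fix z assume "z \<in> D0"
      then have "x \<le> z" unfolding D0_def by simp
      then show "sc (inc_coact v p (x, z)) (\<rho> s (z, x)) = (if a = z then sc (v (x, b)) (\<rho> s (a, x)) else 0)"
        using p True by (auto simp: inc_coact_app)
    qed simp
    also have "\<dots> = (if a \<in> D0 then sc (v (x, b)) (\<rho> s (a, x)) else 0)"
      using finD0 by (simp add: sum.delta)
    finally have R: "g0 (inc_coact v p) = (if a \<in> D0 then sc (v (x, b)) (\<rho> s (a, x)) else 0)" .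
    show ?thesis unfolding L2 R
    proof (cases "b \<in> D0")
      case False
      then have "v (x, b) = 0" using PdD[OF v, of x b] by blast
      then show "(if b \<in> D0 then sc (v (x, b)) (\<rho> s (a, x)) else 0) =
        (if a \<in> D0 then sc (v (x, b)) (\<rho> s (a, x)) else 0)" by simp
    next
      case bD: True
      show "(if b \<in> D0 then sc (v (x, b)) (\<rho> s (a, x)) else 0) =
        (if a \<in> D0 then sc (v (x, b)) (\<rho> s (a, x)) else 0)"
      proof (cases "a \<in> D0")
        case False
        have "\<rho> s (a, x) = 0"
        proof (rule ccontr)
          assume "\<rho> s (a, x) \<noteq> 0"
          then have "x \<le> a" by (rule sx)
          moreover have "a \<le> x" using True bD unfolding D0_def by (metis atLeastAtMost_iff order_trans)
          ultimately show False using False unfolding D0_def by simp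
        qed
        then show ?thesis by simp
      qed (simp add: bD)
    qed
  qed
qed

lemma g0_exx: "g0 (exx x x) = s"
proof -
  have "g0 (exx x x) = (\<Sum>z\<in>D0. if z = x then \<rho> s (x, x) else 0)"
    unfolding g0_def by (rule sum.cong) (auto simp: exx_def)
  also have "\<dots> = s" using finD0 rss by (simp add: sum.delta' D0_def)
  finally show ?thesis .
qed

lemma phi_g0: "phi (g0 (exx x x)) (x, x) = 1"
  using g0_exx rss mus by (simp add: phi_app)

end



lemma dclosed_Un: "dclosed x A \<Longrightarrow> dclosed x B \<Longrightarrow> dclosed x (A \<union> B)"
  unfolding dclosed_def by blast

lemma dclosed_Int: "dclosed x A \<Longrightarrow> dclosed x B \<Longrightarrow> dclosed x (A \<inter> B)"
  unfolding dclosed_def by blast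

lemma dclosed_Icc: "dclosed x {x..y}"
  unfolding dclosed_def by (metis atLeastAtMost_iff order_trans)

definition res :: "'x set \<Rightarrow> ('x \<times> 'x \<Rightarrow> 'k::zero) \<Rightarrow> ('x \<times> 'x \<Rightarrow> 'k)" where
  "res E v = (\<lambda>(p, q). if q \<in> E then v (p, q) else 0)"

lemma res_app: "res E v (p, q) = (if q \<in> E then v (p, q) else 0)"
  by (simp add: res_def)

lemma res_Pd: "v \<in> Pd x D \<Longrightarrow> res E v \<in> Pd x (D \<inter> E)"
proof -
  assume v: "v \<in> Pd x D"
  have "{p. res E v p \<noteq> 0} \<subseteq> {p. v p \<noteq> 0}" by (auto simp: res_def split: if_splits)
  then have "finite {p. res E v p \<noteq> 0}" using v unfolding Pd_def by (blast intro: finite_subset)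
  moreover have "\<forall>p q. res E v (p, q) \<noteq> 0 \<longrightarrow> p = x \<and> x \<le> q \<and> q \<in> D \<inter> E"
  proof (intro allI impI)
    fix p q assume "res E v (p, q) \<noteq> 0"
    then have "q \<in> E" "v (p, q) \<noteq> 0" by (auto simp: res_app split: if_splits)
    then show "p = x \<and> x \<le> q \<and> q \<in> D \<inter> E" using PdD[OF v, of p q] by blast
  qed
  ultimately show ?thesis unfolding Pd_def by blast
qed

lemma res_add: fixes v :: "'x \<times> 'x \<Rightarrow> 'k::monoid_add" shows "res E (v + w) = res E v + res E w"
  by (auto simp: fun_eq_iff res_def)

lemma res_sc: "res E (pscale c v) = pscale c (res E v)"
  by (auto simp: fun_eq_iff res_def pscale_def)

lemma res_split: fixes v :: "'x \<times> 'x \<Rightarrow> 'k::monoid_add" shows "res E v + res (- E) v = v"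
  by (auto simp: fun_eq_iff res_def)

lemma res_in: "v \<in> Pd x D \<Longrightarrow> D \<subseteq> E \<Longrightarrow> res E v = v"
  by (auto simp: fun_eq_iff res_def dest: PdD)

lemma res_out: "v \<in> Pd x D \<Longrightarrow> D \<inter> E = {} \<Longrightarrow> res E v = 0"
  by (auto simp: fun_eq_iff res_def dest: PdD)

lemma Pd_eq: "Pd x D = Pd x (D \<inter> {z. x \<le> z})"
  unfolding Pd_def by blast

lemma Pd_sub_D:
  assumes a1: "D \<subseteq> {z. x \<le> z}" and a2: "Pd x D \<subseteq> (Pd x D' :: ('x::preorder \<times> 'x \<Rightarrow> 'k::zero_neq_one) set)"
  shows "D \<subseteq> D'"
proof
  fix z assume a3: "z \<in> D"
  then have "x \<le> z" using a1 by blast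
  have "(exx x z :: 'x \<times> 'x \<Rightarrow> 'k) \<in> Pd x D'" by (rule subsetD[OF a2 exx_Pd[OF \<open>x \<le> z\<close> a3]])
  from PdD[OF this, of x z] show "z \<in> D'" by simp
qed

context mt
begin

interpretation vs: vector_space sc by (rule vs)

definition good :: "'x set \<Rightarrow> (('x \<times> 'x \<Rightarrow> 'k) \<Rightarrow> 'm) \<Rightarrow> bool" where
  "good D \<psi> \<longleftrightarrow> dclosed x D \<and> D0 \<subseteq> D \<and> D \<subseteq> {z. x \<le> z}
     \<and> comod_hom pscale (Pd x D) inc_coact sc V \<rho> \<psi> \<and> (\<forall>v\<in>Pd x D. phi (\<psi> v) = v)"

lemma good_D0: "good D0 g0"
proof -
  have xD0: "x \<in> D0" unfolding D0_def by simp
  have "\<forall>v\<in>Pd x D0. (phi \<circ> g0) v = v"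
    by (rule idU[OF ch_comp[OF g0_hom phi_hom] xD0]) (simp add: phi_g0)
  then show ?thesis unfolding good_def using dclosed_D0 g0_hom by (auto simp: D0_def)
qed

lemma extend:
  assumes gd: "good D \<psi>" and xy: "x \<le> y"
  shows "\<exists>\<psi>'. good (D \<union> {x..y}) \<psi>' \<and> (\<forall>v\<in>Pd x D. \<psi>' v = \<psi> v)"
proof -
  define F where "F = {x..y}"
  have finF: "finite F" unfolding F_def using locfin by blast
  have dF: "dclosed x F" unfolding F_def by (rule dclosed_Icc)
  have dD: "dclosed x D" and D0D: "D0 \<subseteq> D" and Dx: "D \<subseteq> {z. x \<le> z}"
    and psi: "comod_hom pscale (Pd x D) inc_coact sc V \<rho> \<psi>" and phipsi: "\<forall>v\<in>Pd x D. phi (\<psi> v) = v"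
    using gd unfolding good_def by auto
  have xD: "x \<in> D" using D0D unfolding D0_def by auto
  have xF: "x \<in> F" unfolding F_def using xy by simp
  have Fx: "F \<subseteq> {z. x \<le> z}" unfolding F_def by auto
  define G where "G = D \<inter> F"
  have dG: "dclosed x G" unfolding G_def by (rule dclosed_Int[OF dD dF])
  have GF: "G \<subseteq> F" unfolding G_def by auto
  have psiG: "comod_hom pscale (Pd x G) inc_coact sc V \<rho> \<psi>"
    by (rule ch_mono[OF psi Pd_mono]) (auto simp: G_def)
  obtain h where h: "comod_hom pscale (Pd x F) inc_coact sc V \<rho> h" and hG: "\<forall>v\<in>Pd x G. h v = \<psi> v"
    using fin_ext[OF locfin inj finF dG dF GF psiG] by blast
  define D' where "D' = D \<union> F"
  have dD': "dclosed x D'" unfolding D'_def by (rule dclosed_Un[OF dD dF])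
  have cmD: "is_comodule pscale (Pd x D) inc_coact" by (rule Pd_comodule[OF locfin dD])
  have cmF: "is_comodule pscale (Pd x F) inc_coact" by (rule Pd_comodule[OF locfin dF])
  have cmD': "is_comodule pscale (Pd x D') inc_coact" by (rule Pd_comodule[OF locfin dD'])
  define r1 :: "('x \<times> 'x \<Rightarrow> 'k) \<Rightarrow> ('x \<times> 'x \<Rightarrow> 'k)" where "r1 = res D"
  define r2 :: "('x \<times> 'x \<Rightarrow> 'k) \<Rightarrow> ('x \<times> 'x \<Rightarrow> 'k)" where "r2 = res (- D)"
  have r1P: "r1 v \<in> Pd x D" if "v \<in> Pd x D'" for v :: "'x \<times> 'x \<Rightarrow> 'k"
    using res_Pd[OF that, of D] Pd_mono[of "D' \<inter> D" D x] unfolding r1_def by auto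
  have r2P: "r2 v \<in> Pd x F" if "v \<in> Pd x D'" for v :: "'x \<times> 'x \<Rightarrow> 'k"
    using res_Pd[OF that, of "- D"] Pd_mono[of "D' \<inter> - D" F x] unfolding r2_def D'_def by auto
  have r12: "r1 v + r2 v = v" for v :: "'x \<times> 'x \<Rightarrow> 'k" unfolding r1_def r2_def by (rule res_split)
  have DD': "Pd x D \<subseteq> Pd x D'" unfolding D'_def by (rule Pd_mono) blast
  have FD': "Pd x F \<subseteq> Pd x D'" unfolding D'_def by (rule Pd_mono) blast
  have h0: "h 0 = 0" by (rule ch_zero[OF h cm_zero[OF cmF]])
  define \<psi>' where "\<psi>' v = \<psi> (r1 v) + h (r2 v)" for v :: "'x \<times> 'x \<Rightarrow> 'k"
  have agD: "\<psi>' v = \<psi> v" if "v \<in> Pd x D" for v :: "'x \<times> 'x \<Rightarrow> 'k"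
  proof -
    have "r1 v = v" unfolding r1_def by (rule res_in[OF that]) simp
    moreover have "r2 v = 0" unfolding r2_def by (rule res_out[OF that]) simp
    ultimately show ?thesis unfolding \<psi>'_def using h0 by simp
  qed
  have agF: "\<psi>' v = h v" if v: "v \<in> Pd x F" for v :: "'x \<times> 'x \<Rightarrow> 'k"
  proof -
    have "r1 v \<in> Pd x G" using res_Pd[OF v, of D] unfolding r1_def G_def by (simp add: Int_commute)
    then have "\<psi> (r1 v) = h (r1 v)" using hG by simp
    moreover have "r1 v \<in> Pd x F" using \<open>r1 v \<in> Pd x G\<close> Pd_mono[OF GF] by blast
    moreover have "r2 v \<in> Pd x F" using r2P FD' v by blast
    ultimately have "\<psi>' v = h (r1 v + r2 v)" unfolding \<psi>'_def using ch_add[OF h] by simp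
    then show ?thesis using r12 by simp
  qed
  have memV: "\<psi>' v \<in> V" if "v \<in> Pd x D'" for v :: "'x \<times> 'x \<Rightarrow> 'k"
    unfolding \<psi>'_def using cm_add[OF com ch_mem[OF psi r1P[OF that]] ch_mem[OF h r2P[OF that]]] .
  have addp: "\<psi>' (v + w) = \<psi>' v + \<psi>' w" if "v \<in> Pd x D'" "w \<in> Pd x D'" for v w :: "'x \<times> 'x \<Rightarrow> 'k"
  proof -
    have "r1 (v + w) = r1 v + r1 w" "r2 (v + w) = r2 v + r2 w" unfolding r1_def r2_def by (simp_all add: res_add)
    then have "\<psi>' (v + w) = (\<psi> (r1 v) + \<psi> (r1 w)) + (h (r2 v) + h (r2 w))"
      unfolding \<psi>'_def using ch_add[OF psi r1P[OF that(1)] r1P[OF that(2)]] ch_add[OF h r2P[OF that(1)] r2P[OF that(2)]]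
      by simp
    then show ?thesis unfolding \<psi>'_def by (simp add: algebra_simps)
  qed
  have hom: "comod_hom pscale (Pd x D') inc_coact sc V \<rho> \<psi>'"
  proof (rule comod_homI)
    fix v :: "'x \<times> 'x \<Rightarrow> 'k" assume "v \<in> Pd x D'" then show "\<psi>' v \<in> V" by (rule memV)
  next
    fix v w :: "'x \<times> 'x \<Rightarrow> 'k" assume "v \<in> Pd x D'" "w \<in> Pd x D'" then show "\<psi>' (v + w) = \<psi>' v + \<psi>' w" by (rule addp)
  next
    fix c and v :: "'x \<times> 'x \<Rightarrow> 'k" assume v: "v \<in> Pd x D'"
    have "r1 (pscale c v) = pscale c (r1 v)" "r2 (pscale c v) = pscale c (r2 v)" unfolding r1_def r2_def by (simp_all add: res_sc)
    then have "\<psi>' (pscale c v) = sc c (\<psi> (r1 v)) + sc c (h (r2 v))"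
      unfolding \<psi>'_def using ch_sc[OF psi r1P[OF v]] ch_sc[OF h r2P[OF v]] by simp
    then show "\<psi>' (pscale c v) = sc c (\<psi>' v)" unfolding \<psi>'_def by (simp add: vs.scale_right_distrib)
  next
    fix p and v :: "'x \<times> 'x \<Rightarrow> 'k" assume v: "v \<in> Pd x D'"
    have "\<rho> (\<psi>' v) p = \<rho> (\<psi> (r1 v)) p + \<rho> (h (r2 v)) p"
      unfolding \<psi>'_def by (rule cm_radd[OF com ch_mem[OF psi r1P[OF v]] ch_mem[OF h r2P[OF v]]])
    also have "\<dots> = \<psi> (inc_coact (r1 v) p) + h (inc_coact (r2 v) p)"
      using ch_col[OF psi r1P[OF v]] ch_col[OF h r2P[OF v]] by simp
    also have "\<dots> = \<psi>' (inc_coact (r1 v) p) + \<psi>' (inc_coact (r2 v) p)"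
      using agD[OF cm_rho[OF cmD r1P[OF v]]] agF[OF cm_rho[OF cmF r2P[OF v]]] by simp
    also have "\<dots> = \<psi>' (inc_coact (r1 v) p + inc_coact (r2 v) p)"
      using addp[OF set_mp[OF DD' cm_rho[OF cmD r1P[OF v]]] set_mp[OF FD' cm_rho[OF cmF r2P[OF v]]]] by simp
    also have "\<dots> = \<psi>' (inc_coact v p)"
      using cm_radd[OF cmD' set_mp[OF DD' r1P[OF v]] set_mp[OF FD' r2P[OF v]], of p] r12[of v] by simp
    finally show "\<rho> (\<psi>' v) p = \<psi>' (inc_coact v p)" .
  qed
  have phih: "\<forall>v\<in>Pd x F. (phi \<circ> h) v = v"
  proof (rule idU[OF ch_comp[OF h phi_hom] xF])
    have "(exx x x :: 'x \<times> 'x \<Rightarrow> 'k) \<in> Pd x G" by (rule exx_Pd) (auto simp: G_def xD xF)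
    then have "h (exx x x) = \<psi> (exx x x)" using hG by simp
    moreover have "(exx x x :: 'x \<times> 'x \<Rightarrow> 'k) \<in> Pd x D" by (rule exx_Pd[OF order_refl xD])
    then have "phi (\<psi> (exx x x)) = exx x x" using phipsi by simp
    ultimately show "(phi \<circ> h) (exx x x) (x, x) = 1" by simp
  qed
  have inv: "phi (\<psi>' v) = v" if v: "v \<in> Pd x D'" for v :: "'x \<times> 'x \<Rightarrow> 'k"
  proof -
    have "phi (\<psi>' v) = phi (\<psi> (r1 v)) + phi (h (r2 v))"
      unfolding \<psi>'_def by (rule ch_add[OF phi_hom ch_mem[OF psi r1P[OF v]] ch_mem[OF h r2P[OF v]]])
    also have "\<dots> = r1 v + r2 v" using phipsi r1P[OF v] phih r2P[OF v] by simp
    finally show ?thesis using r12 by simp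
  qed
  have "good D' \<psi>'" unfolding good_def
    using dD' D0D Dx Fx hom inv by (auto simp: D'_def)
  then show ?thesis using agD unfolding D'_def F_def by blast
qed

end



context mt
begin

definition graph :: "'x set \<Rightarrow> (('x \<times> 'x \<Rightarrow> 'k) \<Rightarrow> 'm) \<Rightarrow> (('x \<times> 'x \<Rightarrow> 'k) \<times> 'm) set" where
  "graph D \<psi> = (\<lambda>v. (v, \<psi> v)) ` Pd x D"

definition AA :: "(('x \<times> 'x \<Rightarrow> 'k) \<times> 'm) set set" where
  "AA = {graph D \<psi> | D \<psi>. good D \<psi>}"

lemma graph_sub:
  assumes "graph D \<psi> \<subseteq> graph D' \<psi>'"
  shows "Pd x D \<subseteq> (Pd x D' :: ('x \<times> 'x \<Rightarrow> 'k) set) \<and> (\<forall>v\<in>Pd x D. \<psi>' v = \<psi> v)"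
proof -
  have "v \<in> Pd x D' \<and> \<psi>' v = \<psi> v" if v: "v \<in> Pd x D" for v :: "'x \<times> 'x \<Rightarrow> 'k"
  proof -
    have "(v, \<psi> v) \<in> graph D' \<psi>'" using assms v unfolding graph_def by blast
    then show ?thesis unfolding graph_def by auto
  qed
  note * = this
  show ?thesis
  proof
    show "Pd x D \<subseteq> (Pd x D' :: ('x \<times> 'x \<Rightarrow> 'k) set)" using * by blast
    show "\<forall>v\<in>Pd x D. \<psi>' v = \<psi> v" using * by blast
  qed
qed

lemma good_cm: "good D \<psi> \<Longrightarrow> is_comodule pscale (Pd x D) inc_coact"
  unfolding good_def using Pd_comodule[OF locfin] by blast

lemma good_hom: "good D \<psi> \<Longrightarrow> comod_hom pscale (Pd x D) inc_coact sc V \<rho> \<psi>"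
  unfolding good_def by blast

lemma chain_ub:
  assumes ne: "C \<noteq> {}" and ch: "subset.chain AA C"
  shows "\<Union>C \<in> AA"
proof -
  have CA: "C \<subseteq> AA" and tot: "\<And>G1 G2. G1 \<in> C \<Longrightarrow> G2 \<in> C \<Longrightarrow> G1 \<subseteq> G2 \<or> G2 \<subseteq> G1"
    using ch unfolding subset_chain_def by blast+
  have "\<forall>G\<in>C. \<exists>Dp. good (fst Dp) (snd Dp) \<and> G = graph (fst Dp) (snd Dp)"
  proof
    fix G assume "G \<in> C" then have "G \<in> AA" using CA by blast
    then obtain D \<psi> where "good D \<psi>" "G = graph D \<psi>" unfolding AA_def by blast
    then show "\<exists>Dp. good (fst Dp) (snd Dp) \<and> G = graph (fst Dp) (snd Dp)" by (intro exI[of _ "(D,\<psi>)"]) simp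
  qed
  from bchoice[OF this] obtain f where f: "\<forall>G\<in>C. good (fst (f G)) (snd (f G)) \<and> G = graph (fst (f G)) (snd (f G))"
    by blast
  define dd where "dd G = fst (f G)" for G
  define pp where "pp G = snd (f G)" for G
  have fG: "good (dd G) (pp G) \<and> G = graph (dd G) (pp G)" if "G \<in> C" for G
    unfolding dd_def pp_def using f that by (rule bspec)
  have gd: "good (dd G) (pp G)" if "G \<in> C" for G using fG[OF that] by (rule conjunct1)
  have Geq: "G = graph (dd G) (pp G)" if "G \<in> C" for G using fG[OF that] by (rule conjunct2)
  have GG: "graph (dd G) (pp G) = G" if "G \<in> C" for G by (rule sym[OF Geq[OF that]])
  have inG: "(v, pp G v) \<in> G" if "G \<in> C" "v \<in> Pd x (dd G)" for G v
  proof -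
    have "(v, pp G v) \<in> graph (dd G) (pp G)" unfolding graph_def using that(2) by (rule imageI)
    then show ?thesis by (simp only: GG[OF that(1)])
  qed
  have inG2: "v \<in> Pd x (dd G) \<and> m = pp G v" if "G \<in> C" "(v, m) \<in> G" for G v m
  proof -
    have "(v, m) \<in> graph (dd G) (pp G)" using that(2) by (simp only: GG[OF that(1)])
    then show ?thesis unfolding graph_def by blast
  qed
  have cmp: "Pd x (dd G1) \<subseteq> (Pd x (dd G2) :: ('x \<times> 'x \<Rightarrow> 'k) set) \<and> (\<forall>v\<in>Pd x (dd G1). pp G2 v = pp G1 v)"
    if "G1 \<in> C" "G2 \<in> C" "G1 \<subseteq> G2" for G1 G2
    using graph_sub[of "dd G1" "pp G1" "dd G2" "pp G2"] Geq[OF that(1)] Geq[OF that(2)] that(3) by simp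
  have Dsub: "dd G1 \<subseteq> dd G2" if "G1 \<in> C" "G2 \<in> C" "G1 \<subseteq> G2" for G1 G2
  proof (rule Pd_sub_D)
    show "dd G1 \<subseteq> {z. x \<le> z}" using gd[OF that(1)] unfolding good_def by blast
    show "Pd x (dd G1) \<subseteq> (Pd x (dd G2) :: ('x \<times> 'x \<Rightarrow> 'k) set)" using cmp[OF that] by blast
  qed
  define Du where "Du = \<Union> (dd ` C)"
  have chainD: "subset.chain UNIV (dd ` C)"
    unfolding subset_chain_def
  proof (intro conjI ballI)
    show "dd ` C \<subseteq> UNIV" by simp
    fix X Y assume "X \<in> dd ` C" "Y \<in> dd ` C"
    then obtain G1 G2 where G: "G1 \<in> C" "G2 \<in> C" "X = dd G1" "Y = dd G2" by blast
    show "X \<subseteq> Y \<or> Y \<subseteq> X"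
    proof (cases "G1 \<subseteq> G2")
      case True then show ?thesis using Dsub[OF G(1) G(2)] G by simp
    next
      case False then have "G2 \<subseteq> G1" using tot G by blast
      then show ?thesis using Dsub[OF G(2) G(1)] G by simp
    qed
  qed
  have inPd: "\<exists>G\<in>C. v \<in> Pd x (dd G)" if v: "v \<in> Pd x Du" for v :: "'x \<times> 'x \<Rightarrow> 'k"
  proof -
    define Q where "Q = snd ` {p. v p \<noteq> 0}"
    have finQ: "finite Q" using v unfolding Q_def Pd_def by auto
    have QU: "Q \<subseteq> \<Union> (dd ` C)"
    proof
      fix q assume "q \<in> Q"
      then obtain p where "v (p, q) \<noteq> 0" unfolding Q_def by force
      then show "q \<in> \<Union> (dd ` C)" using PdD[OF v] unfolding Du_def by blast
    qed
    obtain B where B: "B \<in> dd ` C" "Q \<subseteq> B"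
      using finite_subset_Union_chain[OF finQ QU] ne chainD by blast
    then obtain G where G: "G \<in> C" "B = dd G" by blast
    have "v \<in> Pd x (dd G)"
    proof -
      have "\<forall>p q. v (p, q) \<noteq> 0 \<longrightarrow> p = x \<and> x \<le> q \<and> q \<in> dd G"
      proof (intro allI impI)
        fix p q assume nz: "v (p, q) \<noteq> 0"
        then have "q \<in> Q" unfolding Q_def by force
        then show "p = x \<and> x \<le> q \<and> q \<in> dd G" using PdD[OF v nz] B G by blast
      qed
      moreover have "finite {p. v p \<noteq> 0}" using v unfolding Pd_def by blast
      ultimately show ?thesis unfolding Pd_def by blast
    qed
    then show ?thesis using G by blast
  qed
  have common: "\<exists>G\<in>C. Pd x (dd G1) \<subseteq> (Pd x (dd G) :: ('x \<times> 'x \<Rightarrow> 'k) set) \<and> Pd x (dd G2) \<subseteq> (Pd x (dd G) :: ('x \<times> 'x \<Rightarrow> 'k) set)"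
    if "G1 \<in> C" "G2 \<in> C" for G1 G2
  proof (cases "G1 \<subseteq> G2")
    case True then show ?thesis using cmp[OF that True] that by blast
  next
    case False then have "G2 \<subseteq> G1" using tot that by blast
    then show ?thesis using cmp[OF that(2) that(1)] that by blast
  qed
  define psu where "psu v = (SOME m. (v, m) \<in> \<Union>C)" for v
  have val: "psu v = pp G v" if G: "G \<in> C" and v: "v \<in> Pd x (dd G)" for G v
  proof -
    have in1: "(v, pp G v) \<in> \<Union>C" using inG[OF G v] G by blast
    have uniq: "m = pp G v" if vm: "(v, m) \<in> \<Union>C" for m
    proof -
      obtain G' where G': "G' \<in> C" "(v, m) \<in> G'" using vm by blast
      then have v': "v \<in> Pd x (dd G')" and m: "m = pp G' v" using inG2 by blast+
      show ?thesis
      proof (cases "G \<subseteq> G'")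
        case True then show ?thesis using cmp[OF G G'(1) True] v m by simp
      next
        case False then have "G' \<subseteq> G" using tot G G'(1) by blast
        then show ?thesis using cmp[OF G'(1) G] v' m by simp
      qed
    qed
    show ?thesis unfolding psu_def using in1 uniq by (rule someI2)
  qed
  have U: "\<Union>C = graph Du psu"
  proof
    show "\<Union>C \<subseteq> graph Du psu"
    proof
      fix vm assume "vm \<in> \<Union>C"
      then obtain G where G: "G \<in> C" "vm \<in> G" by blast
      obtain v m where vm: "vm = (v, m)" by force
      then have v: "v \<in> Pd x (dd G)" "m = pp G v" using inG2 G by blast+
      have "dd G \<subseteq> Du" unfolding Du_def using G(1) by blast
      have vD: "v \<in> Pd x Du" by (rule subsetD[OF Pd_mono[OF \<open>dd G \<subseteq> Du\<close>] v(1)])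
      have e: "vm = (v, psu v)" using vm v val[OF G(1) v(1)] by simp
      show "vm \<in> graph Du psu" unfolding e graph_def by (rule imageI[OF vD])
    qed
  next
    show "graph Du psu \<subseteq> \<Union>C"
    proof
      fix vm assume "vm \<in> graph Du psu"
      then obtain v where v: "v \<in> Pd x Du" "vm = (v, psu v)" unfolding graph_def by blast
      obtain G where G: "G \<in> C" "v \<in> Pd x (dd G)" using inPd[OF v(1)] by blast
      have "vm = (v, pp G v)" using v(2) val[OF G] by simp
      then show "vm \<in> \<Union>C" using inG[OF G] G(1) by blast
    qed
  qed
  have "good Du psu"
  proof -
    have "dclosed x Du" unfolding Du_def dclosed_def
    proof (intro allI impI)
      fix a b assume "x \<le> a" "a \<le> b" "b \<in> \<Union> (dd ` C)"
      then obtain G where "G \<in> C" "b \<in> dd G" by blast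
      then have "a \<in> dd G" using gd \<open>x \<le> a\<close> \<open>a \<le> b\<close> unfolding good_def dclosed_def by blast
      then show "a \<in> \<Union> (dd ` C)" using \<open>G \<in> C\<close> by blast
    qed
    moreover have "D0 \<subseteq> Du" using ne gd unfolding Du_def good_def by blast
    moreover have "Du \<subseteq> {z. x \<le> z}" using gd unfolding Du_def good_def by blast
    moreover have "comod_hom pscale (Pd x Du) inc_coact sc V \<rho> psu"
    proof (rule comod_homI)
      fix v :: "'x \<times> 'x \<Rightarrow> 'k" assume "v \<in> Pd x Du"
      then obtain G where G: "G \<in> C" "v \<in> Pd x (dd G)" using inPd by blast
      then show "psu v \<in> V" using val[OF G] ch_mem[OF good_hom[OF gd[OF G(1)]]] by simp
    next
      fix v w :: "'x \<times> 'x \<Rightarrow> 'k" assume "v \<in> Pd x Du" "w \<in> Pd x Du"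
      then obtain G1 G2 where "G1 \<in> C" "v \<in> Pd x (dd G1)" "G2 \<in> C" "w \<in> Pd x (dd G2)" using inPd by meson
      then obtain G where G: "G \<in> C" "v \<in> Pd x (dd G)" "w \<in> Pd x (dd G)" using common by blast
      have vw: "v + w \<in> Pd x (dd G)" by (rule cm_add[OF good_cm[OF gd[OF G(1)]] G(2) G(3)])
      show "psu (v + w) = psu v + psu w"
        using val[OF G(1) vw] val[OF G(1) G(2)] val[OF G(1) G(3)] ch_add[OF good_hom[OF gd[OF G(1)]] G(2) G(3)] by simp
    next
      fix c and v :: "'x \<times> 'x \<Rightarrow> 'k" assume "v \<in> Pd x Du"
      then obtain G where G: "G \<in> C" "v \<in> Pd x (dd G)" using inPd by blast
      have cv: "pscale c v \<in> Pd x (dd G)" by (rule cm_sc[OF good_cm[OF gd[OF G(1)]] G(2)])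
      show "psu (pscale c v) = sc c (psu v)"
        using val[OF G(1) cv] val[OF G] ch_sc[OF good_hom[OF gd[OF G(1)]] G(2)] by simp
    next
      fix p and v :: "'x \<times> 'x \<Rightarrow> 'k" assume "v \<in> Pd x Du"
      then obtain G where G: "G \<in> C" "v \<in> Pd x (dd G)" using inPd by blast
      have cv: "inc_coact v p \<in> Pd x (dd G)" by (rule cm_rho[OF good_cm[OF gd[OF G(1)]] G(2)])
      show "\<rho> (psu v) p = psu (inc_coact v p)"
        using val[OF G(1) cv] val[OF G] ch_col[OF good_hom[OF gd[OF G(1)]] G(2)] by simp
    qed
    moreover have "\<forall>v\<in>Pd x Du. phi (psu v) = v"
    proof
      fix v :: "'x \<times> 'x \<Rightarrow> 'k" assume "v \<in> Pd x Du"
      then obtain G where G: "G \<in> C" "v \<in> Pd x (dd G)" using inPd by blast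
      then show "phi (psu v) = v" using val[OF G] gd[OF G(1)] unfolding good_def by simp
    qed
    ultimately show ?thesis unfolding good_def by blast
  qed
  then show ?thesis unfolding AA_def U by blast
qed

lemma global: "\<exists>\<psi>. comod_hom pscale (Ex x) inc_coact sc V \<rho> \<psi> \<and> (\<forall>v\<in>Ex x. phi (\<psi> v) = v)"
proof -
  have "AA \<noteq> {}" using good_D0 unfolding AA_def by blast
  from subset_Zorn_nonempty[OF this chain_ub] obtain M where M: "M \<in> AA" and mx: "\<forall>X\<in>AA. M \<subseteq> X \<longrightarrow> X = M"
    by blast
  obtain Dm \<psi>m where gm: "good Dm \<psi>m" and Meq: "M = graph Dm \<psi>m" using M unfolding AA_def by blast
  have all: "{z. x \<le> z} \<subseteq> Dm"
  proof
    fix y assume "y \<in> {z. x \<le> z}"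
    then have xy: "x \<le> y" by simp
    show "y \<in> Dm"
    proof (rule ccontr)
      assume ny: "y \<notin> Dm"
      obtain \<psi>' where g': "good (Dm \<union> {x..y}) \<psi>'" and ag: "\<forall>v\<in>Pd x Dm. \<psi>' v = \<psi>m v"
        using extend[OF gm xy] by blast
      have "Pd x Dm \<subseteq> Pd x (Dm \<union> {x..y})" by (rule Pd_mono) blast
      then have sub: "graph Dm \<psi>m \<subseteq> graph (Dm \<union> {x..y}) \<psi>'" using ag unfolding graph_def by force
      have "graph (Dm \<union> {x..y}) \<psi>' \<in> AA" using g' unfolding AA_def by blast
      then have eq: "graph (Dm \<union> {x..y}) \<psi>' = graph Dm \<psi>m" using mx sub Meq by blast
      have e: "(exx x y :: 'x \<times> 'x \<Rightarrow> 'k) \<in> Pd x (Dm \<union> {x..y})" by (rule exx_Pd[OF xy]) (simp add: xy)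
      then have "(exx x y, \<psi>' (exx x y)) \<in> graph Dm \<psi>m" using eq unfolding graph_def by blast
      then have "(exx x y :: 'x \<times> 'x \<Rightarrow> 'k) \<in> Pd x Dm" unfolding graph_def by blast
      from PdD[OF this, of x y] have "y \<in> Dm" by simp
      with ny show False by blast
    qed
  qed
  have "Pd x Dm = Ex x"
    unfolding Ex_Pd Pd_def using all by blast
  then show ?thesis using gm unfolding good_def by metis
qed

end




lemma functional_exists:
  fixes sc :: "'k::field \<Rightarrow> 'm::ab_group_add \<Rightarrow> 'm"
  assumes vs: "vector_space sc" and s: "s \<noteq> 0"
  shows "\<exists>\<mu>::'m\<Rightarrow>'k. (\<forall>a b. \<mu> (a+b) = \<mu> a + \<mu> b) \<and> (\<forall>c a. \<mu> (sc c a) = c * \<mu> a) \<and> \<mu> s = 1"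
proof -
  have vk: "vector_space ((*) :: 'k \<Rightarrow> 'k \<Rightarrow> 'k)"
    by unfold_locales (auto simp: algebra_simps)
  interpret vector_space_pair sc "(*) :: 'k \<Rightarrow> 'k \<Rightarrow> 'k" using vs vk by (simp add: vector_space_pair_def)
  have "vs1.independent {s}" using s by (simp add: vs1.independent_insert)
  from linear_independent_extend[OF this, of "\<lambda>_. 1"] obtain g where "Vector_Spaces.linear sc (*) g" "g s = 1" by auto
  then show ?thesis by (auto simp: Vector_Spaces.linear_iff)
qed

lemma ex_minimal:
  assumes "finite A" "A \<noteq> {}"
  shows "\<exists>m\<in>A. \<forall>a\<in>A. a \<le> m \<longrightarrow> m \<le> (a::'a::preorder)"
  using assms
proof (induct A rule: finite_ne_induct)
  case (singleton x)
  then show ?case by simp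
next
  case (insert a A)
  then obtain m where m: "m \<in> A" "\<forall>b\<in>A. b \<le> m \<longrightarrow> m \<le> b" by blast
  show ?case
  proof (cases "a \<le> m \<and> \<not> m \<le> a")
    case True
    have "\<forall>b\<in>insert a A. b \<le> a \<longrightarrow> a \<le> b"
    proof (intro ballI impI)
      fix b assume b: "b \<in> insert a A" "b \<le> a"
      show "a \<le> b"
      proof (cases "b = a")
        case False
        then have "b \<in> A" using b by simp
        moreover have "b \<le> m" using b(2) True order_trans by blast
        ultimately have "m \<le> b" using m by blast
        then show ?thesis using True order_trans by blast
      qed simp
    qed
    then show ?thesis by blast
  next
    case False
    have "\<forall>b\<in>insert a A. b \<le> m \<longrightarrow> m \<le> b" using m False by auto
    then show ?thesis using m by blast
  qed
qed

lemma sub_comodule: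
  fixes sc :: "'k::field \<Rightarrow> 'm::ab_group_add \<Rightarrow> 'm" and \<rho> :: "'m \<Rightarrow> 'x::preorder \<times> 'x \<Rightarrow> 'm"
  assumes cm: "is_comodule sc V \<rho>" and AV: "A \<subseteq> V" and z: "0 \<in> A"
    and ad: "\<And>m n. m \<in> A \<Longrightarrow> n \<in> A \<Longrightarrow> m + n \<in> A"
    and sa: "\<And>c m. m \<in> A \<Longrightarrow> sc c m \<in> A"
    and ra: "\<And>m p. m \<in> A \<Longrightarrow> \<rho> m p \<in> A"
  shows "is_comodule sc A \<rho>"
proof (rule is_comoduleI)
  show "0 \<in> A" by (rule z)
next
  fix m n assume "m \<in> A" "n \<in> A" then show "m + n \<in> A" by (rule ad)
next
  fix c m assume "m \<in> A" then show "sc c m \<in> A" by (rule sa)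
next
  fix m p assume "m \<in> A" then show "\<rho> m p \<in> A" by (rule ra)
next
  fix m assume "m \<in> A" then show "finite {p. \<rho> m p \<noteq> 0}" using AV cm_fin[OF cm] by blast
next
  fix m and a b :: 'x assume "m \<in> A" "\<not> a \<le> b" then show "\<rho> m (a, b) = 0" using AV cm_le[OF cm] by blast
next
  fix m n p assume "m \<in> A" "n \<in> A" then show "\<rho> (m + n) p = \<rho> m p + \<rho> n p"
    using AV cm_radd[OF cm] by blast
next
  fix c m p assume "m \<in> A" then show "\<rho> (sc c m) p = sc c (\<rho> m p)" using AV cm_rsc[OF cm] by blast
next
  fix m and a b c d :: 'x assume m: "m \<in> A" and "a \<le> b" "c \<le> d"
  have "m \<in> V" using m AV by blast
  then show "\<rho> (\<rho> m (c, d)) (a, b) = (if b = c then \<rho> m (a, d) else 0)"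
    by (rule cm_coass[OF cm _ \<open>a \<le> b\<close> \<open>c \<le> d\<close>])
next
  fix m assume m: "m \<in> A"
  have "m \<in> V" using m AV by blast
  then show "m = (\<Sum>x\<in>{x. \<rho> m (x, x) \<noteq> 0}. \<rho> m (x, x))" by (rule cm_counit[OF cm])
qed

context mt
begin

interpretation vs: vector_space sc by (rule vs)

lemma final_iso:
  assumes indec: "indecomposable_comodule sc V \<rho>"
  shows "comod_iso sc V \<rho> pscale (Ex x) inc_coact"
proof -
  obtain \<psi> where psi: "comod_hom pscale (Ex x) inc_coact sc V \<rho> \<psi>" and inv: "\<forall>v\<in>Ex x. phi (\<psi> v) = v"
    using global by blast
  have dU: "dclosed x UNIV" unfolding dclosed_def by blast
  have cmE: "is_comodule pscale (Ex x) inc_coact" unfolding Ex_Pd by (rule Pd_comodule[OF locfin dU])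
  have minus: "m - n \<in> V" if "m \<in> V" "n \<in> V" for m n
  proof -
    have "m + sc (-1) n \<in> V" by (rule cm_add[OF com that(1) cm_sc[OF com that(2)]])
    then show ?thesis by simp
  qed
  have phidiff: "phi (m - n) = phi m - phi n" if "m \<in> V" "n \<in> V" for m n
  proof -
    have "phi ((m - n) + n) = phi (m - n) + phi n" by (rule ch_add[OF phi_hom minus[OF that] that(2)])
    then show ?thesis by (simp add: algebra_simps)
  qed
  have psi0: "\<psi> 0 = 0" by (rule ch_zero[OF psi cm_zero[OF cmE]])
  have phi0: "phi 0 = 0" by (rule ch_zero[OF phi_hom cm_zero[OF com]])
  define A where "A = \<psi> ` Ex x"
  define B where "B = {m \<in> V. phi m = 0}"
  have AV: "A \<subseteq> V" unfolding A_def using ch_mem[OF psi] by blast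
  have BV: "B \<subseteq> V" unfolding B_def by blast
  have cmA: "is_comodule sc A \<rho>"
  proof (rule sub_comodule[OF com AV])
    show "0 \<in> A" unfolding A_def using psi0 cm_zero[OF cmE] by (metis image_eqI)
  next
    fix m n assume "m \<in> A" "n \<in> A"
    then obtain v w :: "'x \<times> 'x \<Rightarrow> 'k" where vw: "v \<in> Ex x" "w \<in> Ex x" "m = \<psi> v" "n = \<psi> w" unfolding A_def by blast
    then have "m + n = \<psi> (v + w)" using ch_add[OF psi] by simp
    then show "m + n \<in> A" unfolding A_def using cm_add[OF cmE vw(1) vw(2)] by blast
  next
    fix c m assume "m \<in> A"
    then obtain v :: "'x \<times> 'x \<Rightarrow> 'k" where v: "v \<in> Ex x" "m = \<psi> v" unfolding A_def by blast
    then have "sc c m = \<psi> (pscale c v)" using ch_sc[OF psi] by simp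
    then show "sc c m \<in> A" unfolding A_def using cm_sc[OF cmE v(1)] by blast
  next
    fix m p assume "m \<in> A"
    then obtain v :: "'x \<times> 'x \<Rightarrow> 'k" where v: "v \<in> Ex x" "m = \<psi> v" unfolding A_def by blast
    then have "\<rho> m p = \<psi> (inc_coact v p)" using ch_col[OF psi] by simp
    then show "\<rho> m p \<in> A" unfolding A_def using cm_rho[OF cmE v(1)] by blast
  qed
  have cmB: "is_comodule sc B \<rho>"
  proof (rule sub_comodule[OF com BV])
    show "0 \<in> B" unfolding B_def using phi0 cm_zero[OF com] by blast
  next
    fix m n assume "m \<in> B" "n \<in> B"
    then show "m + n \<in> B" unfolding B_def using ch_add[OF phi_hom] cm_add[OF com] by auto
  next
    fix c m assume "m \<in> B"
    then show "sc c m \<in> B" unfolding B_def using ch_sc[OF phi_hom] cm_sc[OF com]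
      by (auto simp: pscale_def zero_fun_def)
  next
    fix m p assume m: "m \<in> B"
    then have mV: "m \<in> V" unfolding B_def by blast
    have "phi (\<rho> m p) = inc_coact (phi m) p" by (rule ch_col[OF phi_hom mV, symmetric])
    also have "\<dots> = inc_coact 0 p" using m unfolding B_def by simp
    also have "\<dots> = 0" by (rule cm_rho0[OF cmE])
    finally show "\<rho> m p \<in> B" using m cm_rho[OF com] unfolding B_def by blast
  qed
  have AB: "A \<inter> B = {0}"
  proof
    show "{0} \<subseteq> A \<inter> B" using \<open>is_comodule sc A \<rho>\<close> \<open>is_comodule sc B \<rho>\<close> cm_zero by blast
    show "A \<inter> B \<subseteq> {0}"
    proof
      fix m assume "m \<in> A \<inter> B"
      then obtain v :: "'x \<times> 'x \<Rightarrow> 'k" where v: "v \<in> Ex x" "m = \<psi> v" "phi m = 0" unfolding A_def B_def by blast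
      then have "v = 0" using inv by simp
      then show "m \<in> {0}" using v psi0 by simp
    qed
  qed
  have sum: "\<forall>m\<in>V. \<exists>a\<in>A. \<exists>b\<in>B. m = a + b"
  proof
    fix m assume m: "m \<in> V"
    have pm: "phi m \<in> Ex x" by (rule ch_mem[OF phi_hom m])
    define a where "a = \<psi> (phi m)"
    have aA: "a \<in> A" unfolding a_def A_def using pm by blast
    have aV: "a \<in> V" using aA AV by blast
    have "phi a = phi m" unfolding a_def using inv pm by simp
    then have "m - a \<in> B" unfolding B_def using minus[OF m aV] phidiff[OF m aV] by simp
    then show "\<exists>a\<in>A. \<exists>b\<in>B. m = a + b" using aA by (intro bexI[of _ a] bexI[of _ "m - a"]) auto
  qed
  have "A = {0} \<or> B = {0}"
    using indec[unfolded indecomposable_comodule_def] AV BV cmA cmB AB sum by blast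
  moreover have "A \<noteq> {0}"
  proof
    assume A0: "A = {0}"
    have ex: "(exx x x :: 'x \<times> 'x \<Rightarrow> 'k) \<in> Ex x" unfolding Ex_Pd by (rule exx_Pd) auto
    then have "\<psi> (exx x x) \<in> A" unfolding A_def by blast
    then have "\<psi> (exx x x) = 0" using A0 by blast
    then have "phi 0 = (exx x x :: 'x \<times> 'x \<Rightarrow> 'k)" using inv ex by metis
    then have "(0 :: 'x \<times> 'x \<Rightarrow> 'k) (x, x) = 1" using phi0 exx_app[of x x] by metis
    then show False by simp
  qed
  ultimately have B0: "B = {0}" by blast
  have injphi: "inj_on phi V"
  proof (rule inj_onI)
    fix m n assume mn: "m \<in> V" "n \<in> V" "phi m = phi n"
    then have "m - n \<in> B" unfolding B_def using minus phidiff by simp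
    then show "m = n" using B0 by simp
  qed
  have imgphi: "phi ` V = Ex x"
  proof
    show "phi ` V \<subseteq> Ex x" using ch_mem[OF phi_hom] by blast
    show "Ex x \<subseteq> phi ` V"
    proof
      fix v :: "'x \<times> 'x \<Rightarrow> 'k" assume v: "v \<in> Ex x"
      then have "v = phi (\<psi> v)" using inv by simp
      moreover have "\<psi> v \<in> V" by (rule ch_mem[OF psi v])
      ultimately show "v \<in> phi ` V" by blast
    qed
  qed
  show ?thesis unfolding comod_iso_def bij_betw_def using phi_hom injphi imgphi by blast
qed

end

theorem mainTheorem7:
  fixes sc :: "'k::field \<Rightarrow> 'm::ab_group_add \<Rightarrow> 'm"
    and V :: "'m set"
    and \<rho> :: "'m \<Rightarrow> 'x::preorder \<times> 'x \<Rightarrow> 'm"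
  assumes locfin: "\<forall>x y :: 'x. finite {x..y}"
    and vs: "vector_space sc"
    and com: "is_comodule sc V \<rho>"
    and indec: "indecomposable_comodule sc V \<rho>"
    and inj: "injective_comodule sc V \<rho>"
  shows "\<exists>x :: 'x. comod_iso sc V \<rho> pscale (Ex x) inc_coact"
proof -
  have "V \<noteq> {0}" using indec unfolding indecomposable_comodule_def by blast
  then obtain m0 where m0V: "m0 \<in> V" and m0: "m0 \<noteq> 0" using cm_zero[OF com] by blast
  have "\<exists>z. \<rho> m0 (z, z) \<noteq> 0"
  proof (rule ccontr)
    assume "\<not> (\<exists>z. \<rho> m0 (z, z) \<noteq> 0)"
    then have "{z. \<rho> m0 (z, z) \<noteq> 0} = {}" by blast
    then have "m0 = 0" using cm_counit[OF com m0V] by simp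
    with m0 show False by blast
  qed
  then obtain z where z: "\<rho> m0 (z, z) \<noteq> 0" by blast
  define R where "R = fst ` {p. \<rho> m0 p \<noteq> 0}"
  have finR: "finite R" unfolding R_def using cm_fin[OF com m0V] by blast
  have neR: "R \<noteq> {}" unfolding R_def using z by force
  obtain x where xR: "x \<in> R" and xmin: "\<forall>a\<in>R. a \<le> x \<longrightarrow> x \<le> a"
    using ex_minimal[OF finR neR] by blast
  obtain b where b: "\<rho> m0 (x, b) \<noteq> 0" using xR unfolding R_def by force
  have xb: "x \<le> b" using b cm_le[OF com m0V] by blast
  define s where "s = \<rho> m0 (x, b)"
  have sV: "s \<in> V" unfolding s_def by (rule cm_rho[OF com m0V])
  have rss: "\<rho> s (x, x) = s" unfolding s_def using cm_coass[OF com m0V order_refl[of x] xb] by simp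
  have sx: "x \<le> a" if "\<rho> s (a, x) \<noteq> 0" for a
  proof (cases "a \<le> x")
    case False
    then show ?thesis using that cm_le[OF com sV] by blast
  next
    case True
    have "\<rho> s (a, x) = \<rho> m0 (a, b)" unfolding s_def using cm_coass[OF com m0V True xb] by simp
    then have "a \<in> R" using that unfolding R_def by force
    then show ?thesis using xmin True by blast
  qed
  have s0: "s \<noteq> 0" using b unfolding s_def .
  obtain \<mu> :: "'m \<Rightarrow> 'k" where mu: "\<forall>a b. \<mu> (a+b) = \<mu> a + \<mu> b" "\<forall>c a. \<mu> (sc c a) = c * \<mu> a" "\<mu> s = 1"
    using functional_exists[OF vs s0] by blast
  interpret M: mt sc V \<rho> x \<mu> s
    apply (rule mt.intro) using locfin vs com inj sV sx rss mu by auto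
  show ?thesis using M.final_iso[OF indec] by blast
qed



end
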